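(* For every $\varepsilon>0$ and all $N\geqslant1$, $$\sum_{\substack{m,n\geqslant1\\ mn\leqslant N}}(m,n^\infty)^{\frac12}\big((mn)^\sharp\big)^{\frac14}\ll_\varepsilon N^{1+\varepsilon}.$$
   Context: $(m,n^\infty)$ is the largest divisor of $m$ all of whose prime factors divide $n$. For a positive integer $a$, $a^\sharp=\prod_{p^\nu\| a,\ \nu\geqslant2}p^\nu$ is its squarefull part. *)

theory Defs
  imports "HOL-Analysis.Analysis" "HOL-Computational_Algebra.Primes"
begin

text \<open>(m, n^\<infinity>): the largest divisor of m all of whose prime factors divide n.\<close>
definition dvd_part_inf :: "nat \<Rightarrow> nat \<Rightarrow> nat" where
  "dvd_part_inf m n = (\<Prod>p\<in>{p\<in>prime_factors m. p dvd n}. p ^ multiplicity p m)"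

definition squarefull_part :: "nat \<Rightarrow> nat" where
  "squarefull_part a = (\<Prod>p\<in>{p\<in>prime_factors a. multiplicity p a \<ge> 2}. p ^ multiplicity p a)"

end

theory Submission
  imports Defs
begin

lemma mpos: "prime (p::nat) \<Longrightarrow> x \<noteq> 0 \<Longrightarrow> multiplicity p x > 0 \<longleftrightarrow> p dvd x"
  by (rule prime_multiplicity_gt_zero_iff) (auto intro: prime_imp_prime_elem)

lemma mzero: "prime (p::nat) \<Longrightarrow> x \<noteq> 0 \<Longrightarrow> multiplicity p x = 0 \<longleftrightarrow> \<not> p dvd x"
  using mpos by (metis neq0_conv)

lemma le_prodL: "(1::nat) \<le> n \<Longrightarrow> m * n \<le> N \<Longrightarrow> m \<le> N"
proof -
  assume a: "1 \<le> n" "m * n \<le> N"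
  have "m * 1 \<le> m * n" using a(1) by (rule mult_le_mono2)
  then have "m \<le> m * n" by (simp only: mult_1_right)
  then show ?thesis using a(2) by (rule le_trans)
qed

lemma le_prodR: "(1::nat) \<le> m \<Longrightarrow> m * n \<le> N \<Longrightarrow> n \<le> N"
  by (rule le_prodL[of m n N]) (simp_all only: mult.commute)

lemma prod_P:
  assumes "finite P" "x \<noteq> (0::nat)" "prime_factors x \<subseteq> P" "\<forall>p\<in>P. prime p"
  shows "(\<Prod>p\<in>P. p ^ multiplicity p x) = x"
proof -
  have "(\<Prod>p\<in>P. p ^ multiplicity p x) = (\<Prod>p\<in>prime_factors x. p ^ multiplicity p x)"
  proof (rule prod.mono_neutral_right)
    show "finite P" by fact
    show "prime_factors x \<subseteq> P" by fact
    show "\<forall>i\<in>P - prime_factors x. i ^ multiplicity i x = 1"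
    proof
      fix i assume i: "i \<in> P - prime_factors x"
      then have "prime i" "\<not> i dvd x" using assms by (auto simp: in_prime_factors_iff)
      then show "i ^ multiplicity i x = 1" by (simp add: not_dvd_imp_multiplicity_0)
    qed
  qed
  also have "\<dots> = x" using prod_prime_factors[OF assms(2)] by simp
  finally show ?thesis .
qed

lemma dvd_part_P:
  assumes "finite P" "m \<noteq> (0::nat)" "n \<noteq> 0" "prime_factors m \<subseteq> P" "\<forall>p\<in>P. prime p"
  shows "dvd_part_inf m n = (\<Prod>p\<in>P. p ^ (if multiplicity p n > 0 then multiplicity p m else 0))"
  unfolding dvd_part_inf_def
proof (rule prod.mono_neutral_cong_left)
  show "finite P" by fact
  show "{p \<in> prime_factors m. p dvd n} \<subseteq> P" using assms by auto
  show "\<forall>x\<in>P - {p \<in> prime_factors m. p dvd n}.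
          x ^ (if multiplicity x n > 0 then multiplicity x m else 0) = 1"
  proof
    fix x assume x: "x \<in> P - {p \<in> prime_factors m. p dvd n}"
    then have px: "prime x" using assms by auto
    show "x ^ (if multiplicity x n > 0 then multiplicity x m else 0) = 1"
    proof (cases "multiplicity x n > 0")
      case True
      then have "x dvd n" using mpos[OF px] assms(3) by blast
      then have "\<not> x dvd m" using x px assms(2) by (auto simp: in_prime_factors_iff)
      then show ?thesis using True by (simp add: not_dvd_imp_multiplicity_0)
    qed simp
  qed
  show "x ^ multiplicity x m = x ^ (if multiplicity x n > 0 then multiplicity x m else 0)"
    if "x \<in> {p \<in> prime_factors m. p dvd n}" for x
  proof -
    have "prime x" "x dvd n" using that by (auto simp: in_prime_factors_iff)
    then have "multiplicity x n > 0" using mpos assms(3) by blast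
    then show ?thesis by simp
  qed
qed

lemma sqf_P:
  assumes "finite P" "a \<noteq> (0::nat)" "prime_factors a \<subseteq> P" "\<forall>p\<in>P. prime p"
  shows "squarefull_part a = (\<Prod>p\<in>P. p ^ (if multiplicity p a \<ge> 2 then multiplicity p a else 0))"
  unfolding squarefull_part_def
proof (rule prod.mono_neutral_cong_left)
  show "finite P" by fact
  show "{p \<in> prime_factors a. 2 \<le> multiplicity p a} \<subseteq> P" using assms by auto
  show "\<forall>x\<in>P - {p \<in> prime_factors a. 2 \<le> multiplicity p a}.
          x ^ (if multiplicity x a \<ge> 2 then multiplicity x a else 0) = 1"
    using assms by (auto simp: mzero in_prime_factors_iff)
qed (use assms in \<open>auto simp: mzero in_prime_factors_iff\<close>)

lemma real_prod_powr:
  assumes "\<forall>p\<in>P. prime (p::nat)"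
  shows "real (\<Prod>p\<in>P. p ^ g p) powr c = (\<Prod>p\<in>P. real p powr (c * real (g p)))"
proof -
  have "real (\<Prod>p\<in>P. p ^ g p) powr c = (\<Prod>p\<in>P. (real p ^ g p) powr c)"
    by (simp add: prod_powr_distrib)
  also have "\<dots> = (\<Prod>p\<in>P. real p powr (c * real (g p)))"
  proof (rule prod.cong)
    fix p assume "p \<in> P"
    then have "real p > 0" using assms prime_gt_0_nat by auto
    then show "(real p ^ g p) powr c = real p powr (c * real (g p))"
      by (simp add: powr_realpow[symmetric] powr_powr mult.commute)
  qed simp
  finally show ?thesis .
qed

definition W :: "real \<Rightarrow> nat \<Rightarrow> nat \<times> nat \<Rightarrow> real" where
  "W \<sigma> p = (\<lambda>(i,j). real p powr ((if j > 0 then real i else 0) / 2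
        + (if i + j \<ge> 2 then real (i + j) else 0) / 4 - \<sigma> * (real i + real j)))"

lemma pair_identity:
  assumes "finite P" "m \<noteq> (0::nat)" "n \<noteq> 0" "prime_factors m \<subseteq> P" "prime_factors n \<subseteq> P"
    "\<forall>p\<in>P. prime p"
  shows "real (dvd_part_inf m n) powr (1/2) * real (squarefull_part (m * n)) powr (1/4)
     / real (m * n) powr \<sigma> = (\<Prod>p\<in>P. W \<sigma> p (multiplicity p m, multiplicity p n))"
proof -
  have mn0: "m * n \<noteq> 0" using assms by simp
  have pfmn: "prime_factors (m*n) \<subseteq> P" using assms by (auto simp: prime_factors_product)
  have mult: "multiplicity p (m*n) = multiplicity p m + multiplicity p n" if "p \<in> P" for p
    using assms that by (intro prime_elem_multiplicity_mult_distrib) auto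
  have e1: "real (dvd_part_inf m n) powr (1/2) = (\<Prod>p\<in>P. real p powr (1/2 * real (if multiplicity p n > 0 then multiplicity p m else 0)))"
    unfolding dvd_part_P[OF assms(1-4,6)] by (rule real_prod_powr[OF assms(6)])
  have e2: "real (squarefull_part (m*n)) powr (1/4) = (\<Prod>p\<in>P. real p powr (1/4 * real (if multiplicity p m + multiplicity p n \<ge> 2 then multiplicity p m + multiplicity p n else 0)))"
  proof -
    have "real (squarefull_part (m*n)) powr (1/4) = (\<Prod>p\<in>P. real p powr (1/4 * real (if multiplicity p (m*n) \<ge> 2 then multiplicity p (m*n) else 0)))"
      unfolding sqf_P[OF assms(1) mn0 pfmn assms(6)] using assms
      by (subst real_prod_powr[OF assms(6)]) auto
    also have "\<dots> = (\<Prod>p\<in>P. real p powr (1/4 * real (if multiplicity p m + multiplicity p n \<ge> 2 then multiplicity p m + multiplicity p n else 0)))"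
      by (rule prod.cong) (auto simp: mult)
    finally show ?thesis .
  qed
  have e3: "real (m*n) powr \<sigma> = (\<Prod>p\<in>P. real p powr (\<sigma> * real (multiplicity p m + multiplicity p n)))"
  proof -
    have a: "(\<Prod>p\<in>P. p ^ multiplicity p (m*n)) = m*n" by (rule prod_P[OF assms(1) mn0 pfmn assms(6)])
    have b: "(\<Prod>p\<in>P. p ^ multiplicity p (m*n)) = (\<Prod>p\<in>P. p ^ (multiplicity p m + multiplicity p n))"
      by (rule prod.cong) (simp_all add: mult)
    have "real (m*n) powr \<sigma> = real (\<Prod>p\<in>P. p ^ (multiplicity p m + multiplicity p n)) powr \<sigma>"
      using a b by simp
    also have "\<dots> = (\<Prod>p\<in>P. real p powr (\<sigma> * real (multiplicity p m + multiplicity p n)))"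
      by (rule real_prod_powr[OF assms(6)])
    finally show ?thesis .
  qed
  have "(\<Prod>p\<in>P. real p powr (1/2 * real (if multiplicity p n > 0 then multiplicity p m else 0))) *
        (\<Prod>p\<in>P. real p powr (1/4 * real (if multiplicity p m + multiplicity p n \<ge> 2 then multiplicity p m + multiplicity p n else 0))) /
        (\<Prod>p\<in>P. real p powr (\<sigma> * real (multiplicity p m + multiplicity p n)))
     = (\<Prod>p\<in>P. real p powr (1/2 * real (if multiplicity p n > 0 then multiplicity p m else 0)) *
         real p powr (1/4 * real (if multiplicity p m + multiplicity p n \<ge> 2 then multiplicity p m + multiplicity p n else 0)) /
         real p powr (\<sigma> * real (multiplicity p m + multiplicity p n)))"
    by (simp only: prod.distrib prod_dividef)
  also have "\<dots> = (\<Prod>p\<in>P. W \<sigma> p (multiplicity p m, multiplicity p n))"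
  proof (rule prod.cong)
    fix p assume "p \<in> P"
    then have p0: "real p > 0" using assms prime_gt_0_nat by auto
    define i where "i = multiplicity p m"
    define j where "j = multiplicity p n"
    have ex: "1/2 * real (if j > 0 then i else 0) + 1/4 * real (if i + j \<ge> 2 then i + j else 0) - \<sigma> * real (i + j)
       = (if j > 0 then real i else 0) / 2 + (if i + j \<ge> 2 then real (i + j) else 0) / 4 - \<sigma> * (real i + real j)"
      by auto
    show "real p powr (1/2 * real (if multiplicity p n > 0 then multiplicity p m else 0)) *
         real p powr (1/4 * real (if multiplicity p m + multiplicity p n \<ge> 2 then multiplicity p m + multiplicity p n else 0)) /
         real p powr (\<sigma> * real (multiplicity p m + multiplicity p n)) = W \<sigma> p (multiplicity p m, multiplicity p n)"
    proof -
      have "real p powr (1/2 * real (if j > 0 then i else 0)) *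
         real p powr (1/4 * real (if i + j \<ge> 2 then i + j else 0)) /
         real p powr (\<sigma> * real (i + j))
        = real p powr (1/2 * real (if j > 0 then i else 0) + 1/4 * real (if i + j \<ge> 2 then i + j else 0) - \<sigma> * real (i + j))"
        by (simp only: powr_add powr_diff)
      also have "\<dots> = W \<sigma> p (i, j)" by (simp only: ex W_def prod.case)
      finally show ?thesis unfolding i_def j_def .
    qed
  qed simp
  finally show ?thesis unfolding e1 e2 e3 .
qed

lemma lin_aux:
  fixes E a b S \<sigma> :: real
  assumes "E = a/2 + (a+b)/4 - S + \<sigma>" "a + b - 1 \<le> S - \<sigma>" "1 \<le> b" "2 \<le> a + b"
  shows "E \<le> 0" "E \<le> -(a+b-2)/4"
  using assms by (simp add: field_simps)+

lemma lin_b: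
  fixes E a b S \<sigma> :: real
  assumes "E = a/2 - S + \<sigma>" "a + b - 1 \<le> S - \<sigma>" "1 \<le> b" "1 \<le> a + b" "a + b < 2"
  shows "E \<le> 0" "E \<le> -(a+b-2)/4"
  using assms by (simp add: field_simps)+

lemma lin_c:
  fixes E a b S \<sigma> :: real
  assumes "E = (a+b)/4 - S + \<sigma>" "a + b - 1 \<le> S - \<sigma>" "b = 0" "2 \<le> a + b"
  shows "E \<le> 0" "E \<le> -(a+b-2)/4"
  using assms by (simp add: field_simps)+

lemma lin_d:
  fixes E a b S \<sigma> :: real
  assumes "E = - S + \<sigma>" "a + b - 1 \<le> S - \<sigma>" "b = 0" "1 \<le> a + b" "a + b < 2"
  shows "E \<le> 0" "E \<le> -(a+b-2)/4"
  using assms by (simp add: field_simps)+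

lemma exp_ineq:
  fixes i j :: nat and \<sigma> :: real
  assumes "\<sigma> \<ge> 1" "i + j \<ge> 1"
  defines "E \<equiv> (if j > 0 then real i else 0) / 2 + (if i + j \<ge> 2 then real (i + j) else 0) / 4
              - \<sigma> * (real i + real j) + \<sigma>"
  shows "E \<le> 0" "E \<le> -(real i + real j - 2) / 4"
proof -
  have h: "(\<sigma> - 1) * (real i + real j - 1) \<ge> 0" using assms by auto
  have h2: "\<sigma> * (real i + real j) - \<sigma> \<ge> real i + real j - 1" using h by (simp add: algebra_simps)
  have kr: "(2 \<le> i + j) = (2 \<le> real i + real j)" by linarith
  have k1: "real i + real j \<ge> 1" using assms(2) by linarith
  have main: "E \<le> 0 \<and> E \<le> -(real i + real j - 2) / 4"
  proof (cases "j > 0")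
    case J: True
    have rj: "real j \<ge> 1" using J by simp
    show ?thesis
    proof (cases "2 \<le> i + j")
      case K: True
      have k2: "real i + real j \<ge> 2" using K kr by simp
      have e: "E = real i / 2 + (real i + real j) / 4 - \<sigma> * (real i + real j) + \<sigma>" unfolding E_def using J K by simp
      have "E \<le> 0" using lin_aux(1)[OF e h2 rj k2] .
      moreover have "E \<le> -(real i + real j - 2) / 4" using lin_aux(2)[OF e h2 rj k2] .
      ultimately show ?thesis by blast
    next
      case K: False
      have k2: "real i + real j < 2" using K kr by simp
      have e: "E = real i / 2 - \<sigma> * (real i + real j) + \<sigma>" unfolding E_def using J K by simp
      have "E \<le> 0" using lin_b(1)[OF e h2 rj k1 k2] .
      moreover have "E \<le> -(real i + real j - 2) / 4" using lin_b(2)[OF e h2 rj k1 k2] .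
      ultimately show ?thesis by blast
    qed
  next
    case J: False
    have rj: "real j = 0" using J by simp
    show ?thesis
    proof (cases "2 \<le> i + j")
      case K: True
      have k2: "real i + real j \<ge> 2" using K kr by simp
      have e: "E = (real i + real j) / 4 - \<sigma> * (real i + real j) + \<sigma>" unfolding E_def using J K by simp
      have "E \<le> 0" using lin_c(1)[OF e h2 rj k2] .
      moreover have "E \<le> -(real i + real j - 2) / 4" using lin_c(2)[OF e h2 rj k2] .
      ultimately show ?thesis by blast
    next
      case K: False
      have k2: "real i + real j < 2" using K kr by simp
      have e: "E = - (\<sigma> * (real i + real j)) + \<sigma>" unfolding E_def using J K by simp
      have "E \<le> 0" using lin_d(1)[OF e h2 rj k1 k2] .
      moreover have "E \<le> -(real i + real j - 2) / 4" using lin_d(2)[OF e h2 rj k1 k2] .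
      ultimately show ?thesis by blast
    qed
  qed
  then show "E \<le> 0" "E \<le> -(real i + real j - 2) / 4" by auto
qed

lemma term_bound:
  fixes \<sigma> :: real
  assumes "prime p" "\<sigma> \<ge> 1" "(i, j) \<noteq> (0, 0)"
  shows "W \<sigma> p (i, j) \<le> real p powr (-\<sigma>) * (2 powr (1/2) * (2 powr (-1/4)) ^ i * (2 powr (-1/4)) ^ j)"
proof -
  define E where "E = (if j > 0 then real i else 0) / 2 + (if i + j \<ge> 2 then real (i + j) else 0) / 4
              - \<sigma> * (real i + real j) + \<sigma>"
  have k: "i + j \<ge> 1" using assms(3) by auto
  have E1: "E \<le> 0" and E2: "E \<le> -(real i + real j - 2) / 4"
    using exp_ineq[OF assms(2) k] unfolding E_def by auto
  have p2: "real p \<ge> 2" using prime_ge_2_nat[OF assms(1)] by linarith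
  have "W \<sigma> p (i, j) = real p powr (-\<sigma> + E)" unfolding W_def E_def by simp
  also have "\<dots> = real p powr (-\<sigma>) * real p powr E" by (rule powr_add)
  also have "\<dots> \<le> real p powr (-\<sigma>) * 2 powr E"
    by (intro mult_left_mono powr_mono2' E1) (use p2 in auto)
  also have "\<dots> \<le> real p powr (-\<sigma>) * 2 powr (-(real i + real j - 2) / 4)"
    by (intro mult_left_mono powr_mono E2) auto
  also have "2 powr (-(real i + real j - 2) / 4) = 2 powr (1/2) * (2 powr (-1/4)) ^ i * (2 powr (-1/4)) ^ j"
  proof -
    have ei: "(2 powr (-1/4::real))^i = 2 powr (real i * (-1/4))" by (simp add: powr_power)
    have ej: "(2 powr (-1/4::real))^j = 2 powr (real j * (-1/4))" by (simp add: powr_power)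
    have x: "-(real i + real j - 2)/4 = 1/2 + real i * (-1/4) + real j * (-1/4)" by (simp add: field_simps)
    have "2 powr (-(real i + real j - 2)/4) = (2::real) powr (1/2 + real i * (-1/4) + real j * (-1/4))"
      by (simp only: x)
    also have "\<dots> = 2 powr (1/2) * 2 powr (real i * (-1/4)) * 2 powr (real j * (-1/4))"
      by (simp only: powr_add)
    also have "\<dots> = 2 powr (1/2) * (2 powr (-1/4)) ^ i * (2 powr (-1/4)) ^ j"
      by (simp only: ei ej)
    finally show ?thesis .
  qed
  finally show ?thesis .
qed

lemma local_bound:
  fixes \<sigma> :: real
  assumes "prime p" "\<sigma> \<ge> 1"
  shows "(\<Sum>ij\<in>{0..N}\<times>{0..N}. W \<sigma> p ij) \<le> 1 + 2 powr (1/2) / (1 - 2 powr (-1/4))^2 * real p powr (-\<sigma>)"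
proof -
  define r :: real where "r = 2 powr (-1/4)"
  define c :: real where "c = real p powr (-\<sigma>)"
  define q :: real where "q = 2 powr (1/2)"
  have r0: "r > 0" unfolding r_def by simp
  have r1: "r < 1" unfolding r_def by (simp add: powr_less_one)
  have c0: "c \<ge> 0" unfolding c_def by simp
  have q0: "q \<ge> 0" unfolding q_def by simp
  define S where "S = {0..N}\<times>{0..N}"
  have fS: "finite S" unfolding S_def by simp
  have p0: "real p > 0" using assms(1) prime_gt_0_nat by auto
  have s1: "(\<Sum>ij\<in>S. W \<sigma> p ij) = W \<sigma> p (0,0) + (\<Sum>ij\<in>S - {(0,0)}. W \<sigma> p ij)"
    by (rule sum.remove) (auto simp: S_def fS)
  have w00: "W \<sigma> p (0,0) = 1" using p0 by (simp add: W_def)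
  have s2: "(\<Sum>ij\<in>S - {(0,0)}. W \<sigma> p ij) \<le> (\<Sum>ij\<in>S - {(0,0)}. c * (q * r ^ fst ij * r ^ snd ij))"
  proof (rule sum_mono)
    fix ij assume ij: "ij \<in> S - {(0,0)}"
    obtain i j where e: "ij = (i,j)" by (cases ij)
    have "(i,j) \<noteq> (0,0)" using ij e by auto
    from term_bound[OF assms this] show "W \<sigma> p ij \<le> c * (q * r ^ fst ij * r ^ snd ij)"
      using e by (simp only: r_def c_def q_def fst_conv snd_conv)
  qed
  have s3: "(\<Sum>ij\<in>S - {(0,0)}. c * (q * r ^ fst ij * r ^ snd ij)) \<le> (\<Sum>ij\<in>S. c * (q * r ^ fst ij * r ^ snd ij))"
    by (rule sum_mono2) (use fS r0 c0 q0 in auto)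
  have s4: "(\<Sum>ij\<in>S. c * (q * r ^ fst ij * r ^ snd ij))
       = (\<Sum>i\<in>{0..N}. \<Sum>j\<in>{0..N}. c * (q * r ^ i * r ^ j))"
    by (simp only: S_def sum.cartesian_product split_def fst_conv snd_conv)
  have s5: "(\<Sum>i\<in>{0..N}. \<Sum>j\<in>{0..N}. c * (q * r ^ i * r ^ j)) = c * q * ((\<Sum>i\<in>{0..N}. r ^ i) * (\<Sum>j\<in>{0..N}. r ^ j))"
  proof -
    have "c * q * ((\<Sum>i\<in>{0..N}. r ^ i) * (\<Sum>j\<in>{0..N}. r ^ j)) = c * q * (\<Sum>i\<in>{0..N}. \<Sum>j\<in>{0..N}. r ^ i * r ^ j)"
      by (simp only: sum_product)
    also have "\<dots> = (\<Sum>i\<in>{0..N}. \<Sum>j\<in>{0..N}. c * q * (r ^ i * r ^ j))"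
      by (simp only: sum_distrib_left)
    also have "\<dots> = (\<Sum>i\<in>{0..N}. \<Sum>j\<in>{0..N}. c * (q * r ^ i * r ^ j))"
      by (simp only: mult.assoc)
    finally show ?thesis by (rule sym)
  qed
  have g: "(\<Sum>i\<in>{0..N}. r ^ i) \<le> 1 / (1 - r)"
    using sum_le_suminf[OF summable_geometric[of r], of "{0..N}"] suminf_geometric[of r] r0 r1 by auto
  have g0: "0 \<le> (\<Sum>i\<in>{0..N}. r ^ i)" using r0 by (intro sum_nonneg) auto
  have s6: "c * q * ((\<Sum>i\<in>{0..N}. r ^ i) * (\<Sum>j\<in>{0..N}. r ^ j)) \<le> c * q * ((1 / (1 - r)) * (1 / (1 - r)))"
    by (intro mult_left_mono mult_mono g g0 mult_nonneg_nonneg c0 q0) (use r1 in auto)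
  have s7: "c * q * ((1 / (1 - r)) * (1 / (1 - r))) = q / (1 - r)^2 * c"
    by (simp add: power2_eq_square)
  have fin: "(\<Sum>ij\<in>S. W \<sigma> p ij) \<le> 1 + q / (1 - r)^2 * c"
  proof -
    have t1: "(\<Sum>ij\<in>S. W \<sigma> p ij) = 1 + (\<Sum>ij\<in>S - {(0,0)}. W \<sigma> p ij)"
      using s1 unfolding w00 .
    have "(\<Sum>ij\<in>S - {(0,0)}. W \<sigma> p ij) \<le> (\<Sum>ij\<in>S. c * (q * r ^ fst ij * r ^ snd ij))"
      by (rule order_trans[OF s2 s3])
    also have "\<dots> = c * q * ((\<Sum>i\<in>{0..N}. r ^ i) * (\<Sum>j\<in>{0..N}. r ^ j))"
      using s4 s5 by (rule trans)
    also have "\<dots> \<le> c * q * ((1 / (1 - r)) * (1 / (1 - r)))" by (rule s6)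
    also have "\<dots> = q / (1 - r)^2 * c" by (rule s7)
    finally have t2: "(\<Sum>ij\<in>S - {(0,0)}. W \<sigma> p ij) \<le> q / (1 - r)^2 * c" .
    show ?thesis unfolding t1 by (rule add_left_mono[OF t2])
  qed
  then show ?thesis unfolding S_def r_def c_def q_def .
qed

theorem mainTheorem7:
  fixes \<epsilon> :: real
  assumes "\<epsilon> > 0"
  shows "\<exists>C::real. \<forall>N::nat. N \<ge> 1 \<longrightarrow>
    (\<Sum>(m, n)\<in>{(m, n). m \<ge> 1 \<and> n \<ge> 1 \<and> m * n \<le> N}.
        real (dvd_part_inf m n) powr (1/2) * real (squarefull_part (m * n)) powr (1/4))
      \<le> C * real N powr (1 + \<epsilon>)"
proof -
  define \<sigma> where "\<sigma> = 1 + \<epsilon>"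
  have s1: "\<sigma> \<ge> 1" using assms unfolding \<sigma>_def by simp
  define A :: real where "A = 2 powr (1/2) / (1 - 2 powr (-1/4))^2"
  have A0: "A \<ge> 0" unfolding A_def by simp
  have summ: "summable (\<lambda>n. real (Suc n) powr (-\<sigma>))"
  proof -
    have "summable (\<lambda>n. real n powr (-\<sigma>))" using summable_real_powr_iff[of "-\<sigma>"] assms
      unfolding \<sigma>_def by simp
    then show ?thesis using summable_Suc_iff[of "\<lambda>n. real n powr (-\<sigma>)"] by simp
  qed
  define Z where "Z = suminf (\<lambda>n. real (Suc n) powr (-\<sigma>))"
  show ?thesis
  proof (intro exI allI impI)
    fix N :: nat assume N1: "N \<ge> 1"
    define T where "T = {(m, n). m \<ge> 1 \<and> n \<ge> 1 \<and> m * n \<le> N}"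
    define P where "P = {p. prime p \<and> p \<le> N}"
    define vec where "vec = (\<lambda>(m::nat,n::nat). restrict (\<lambda>p. (multiplicity p m, multiplicity p n)) P)"
    define f where "f = (\<lambda>(m::nat,n::nat). real (dvd_part_inf m n) powr (1/2) * real (squarefull_part (m*n)) powr (1/4))"
    define g where "g = (\<lambda>\<phi>. \<Prod>p\<in>P. W \<sigma> p (\<phi> p))"
    have TS: "T \<subseteq> {1..N} \<times> {1..N}"
    proof
      fix x assume "x \<in> T"
      then obtain m n where x: "x = (m,n)" "m \<ge> 1" "n \<ge> 1" "m * n \<le> N" unfolding T_def by auto
      have "m \<le> N" "n \<le> N" using x le_prodL le_prodR by blast+
      then show "x \<in> {1..N} \<times> {1..N}" using x by auto
    qed
    have finT: "finite T" using TS finite_subset by blast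
    have finP: "finite P" unfolding P_def by simp
    have Pp: "\<forall>p\<in>P. prime p" unfolding P_def by simp
    have pf: "prime_factors m \<subseteq> P" "prime_factors n \<subseteq> P" if "(m,n) \<in> T" for m n
    proof -
      have h: "m \<ge> 1" "n \<ge> 1" "m * n \<le> N" using that unfolding T_def by auto
      have "m \<le> N" "n \<le> N" using h le_prodL le_prodR by blast+
      show "prime_factors m \<subseteq> P"
      proof
        fix p assume "p \<in> prime_factors m"
        then have "prime p" "p dvd m" by (auto simp: in_prime_factors_iff)
        moreover have "p \<le> m" using \<open>p dvd m\<close> h(1) by (intro dvd_imp_le) auto
        ultimately show "p \<in> P" using \<open>m \<le> N\<close> unfolding P_def by auto
      qed
      show "prime_factors n \<subseteq> P"
      proof
        fix p assume "p \<in> prime_factors n"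
        then have "prime p" "p dvd n" by (auto simp: in_prime_factors_iff)
        moreover have "p \<le> n" using \<open>p dvd n\<close> h(2) by (intro dvd_imp_le) auto
        ultimately show "p \<in> P" using \<open>n \<le> N\<close> unfolding P_def by auto
      qed
    qed
    have mle: "multiplicity p m \<le> N" if "m \<ge> 1" "m \<le> N" "prime p" for p m
    proof -
      have "p ^ multiplicity p m dvd m" by (rule multiplicity_dvd)
      then have "p ^ multiplicity p m \<le> m" using that by (intro dvd_imp_le) auto
      moreover have "2 ^ multiplicity p m \<le> p ^ multiplicity p m"
        using prime_ge_2_nat[OF that(3)] by (intro power_mono) auto
      moreover have "multiplicity p m < 2 ^ multiplicity p m" by (rule less_exp)
      ultimately show ?thesis using that by linarith
    qed
    have ident: "f t = real (fst t * snd t) powr \<sigma> * g (vec t)" if "t \<in> T" for t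
    proof -
      obtain m n where t: "t = (m,n)" by (cases t)
      have h: "m \<ge> 1" "n \<ge> 1" using that t unfolding T_def by auto
      have pos: "real (m*n) powr \<sigma> > 0" using h by simp
      have gv: "g (vec t) = (\<Prod>p\<in>P. W \<sigma> p (multiplicity p m, multiplicity p n))"
        unfolding g_def vec_def t by (rule prod.cong) auto
      have m0: "m \<noteq> 0" "n \<noteq> 0" using h by auto
      have "f t / real (m*n) powr \<sigma> = g (vec t)"
        unfolding gv unfolding t f_def prod.case by (rule pair_identity[OF finP m0 pf[OF that[unfolded t]] Pp])
      then have "f t = g (vec t) * real (m*n) powr \<sigma>" using pos by (simp add: divide_eq_eq)
      then show ?thesis using t by (simp only: mult.commute fst_conv snd_conv)
    qed
    have g0: "g \<phi> \<ge> 0" for \<phi> unfolding g_def by (intro prod_nonneg) (auto simp: W_def split: prod.splits)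
    have inj: "inj_on vec T"
    proof (rule inj_onI)
      fix x y assume x: "x \<in> T" and y: "y \<in> T" and e: "vec x = vec y"
      obtain m n where xm: "x = (m,n)" by (cases x)
      obtain m' n' where ym: "y = (m',n')" by (cases y)
      have h: "m \<ge> 1" "n \<ge> 1" "m' \<ge> 1" "n' \<ge> 1" using x y xm ym unfolding T_def by auto
      have eq: "multiplicity p m = multiplicity p m' \<and> multiplicity p n = multiplicity p n'" if "prime p" for p
      proof (cases "p \<in> P")
        case True
        then show ?thesis using fun_cong[OF e, of p] xm ym unfolding vec_def by auto
      next
        case False
        then have "\<not> p dvd m" "\<not> p dvd n" "\<not> p dvd m'" "\<not> p dvd n'"
          using pf[OF x[unfolded xm]] pf[OF y[unfolded ym]] that h by (auto simp: in_prime_factors_iff)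
        then show ?thesis by (simp add: not_dvd_imp_multiplicity_0)
      qed
      have "m = m'" using multiplicity_eq_imp_eq[of m m'] eq h by simp
      moreover have "n = n'" using multiplicity_eq_imp_eq[of n n'] eq h by simp
      ultimately show "x = y" using xm ym by simp
    qed
    have img: "vec ` T \<subseteq> PiE P (\<lambda>_. {0..N} \<times> {0..N})"
    proof
      fix \<phi> assume "\<phi> \<in> vec ` T"
      then obtain m n where t: "(m,n) \<in> T" "\<phi> = vec (m,n)" by auto
      have h: "m \<ge> 1" "n \<ge> 1" "m * n \<le> N" using t unfolding T_def by auto
      have "m \<le> N" "n \<le> N" using h le_prodL le_prodR by blast+
      then have "\<forall>p\<in>P. (multiplicity p m, multiplicity p n) \<in> {0..N} \<times> {0..N}"
        using h Pp mle by auto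
      then show "\<phi> \<in> PiE P (\<lambda>_. {0..N} \<times> {0..N})" using t(2) unfolding vec_def
        by (simp add: restrict_PiE_iff)
    qed
    have c1: "(\<Sum>(m, n)\<in>T. real (dvd_part_inf m n) powr (1/2) * real (squarefull_part (m * n)) powr (1/4))
        = (\<Sum>t\<in>T. f t)" unfolding f_def by (rule refl)
    have c2: "(\<Sum>t\<in>T. f t) \<le> (\<Sum>t\<in>T. real N powr \<sigma> * g (vec t))"
    proof (rule sum_mono)
      fix t assume t: "t \<in> T"
      have "fst t * snd t \<le> N" using t unfolding T_def by auto
      then have "real (fst t * snd t) \<le> real N" by (simp only: of_nat_le_iff)
      then have "real (fst t * snd t) powr \<sigma> \<le> real N powr \<sigma>"
        using s1 by (intro powr_mono2) auto
      then show "f t \<le> real N powr \<sigma> * g (vec t)" unfolding ident[OF t]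
        by (intro mult_right_mono g0)
    qed
    have c2b: "(\<Sum>t\<in>T. real N powr \<sigma> * g (vec t)) = real N powr \<sigma> * (\<Sum>\<phi>\<in>vec ` T. g \<phi>)"
    proof -
      have "(\<Sum>\<phi>\<in>vec ` T. g \<phi>) = (\<Sum>t\<in>T. g (vec t))" using sum.reindex[OF inj, of g] by simp
      then show ?thesis by (simp only: sum_distrib_left)
    qed
    have c3: "(\<Sum>\<phi>\<in>vec ` T. g \<phi>) \<le> (\<Sum>\<phi>\<in>PiE P (\<lambda>_. {0..N} \<times> {0..N}). g \<phi>)"
      by (rule sum_mono2[OF _ img]) (auto intro: finite_PiE finP g0)
    have c4: "(\<Sum>\<phi>\<in>PiE P (\<lambda>_. {0..N} \<times> {0..N}). g \<phi>) = (\<Prod>p\<in>P. \<Sum>ij\<in>{0..N} \<times> {0..N}. W \<sigma> p ij)"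
      unfolding g_def by (rule prod_sum_PiE[symmetric]) (auto simp: finP)
    have c5: "(\<Prod>p\<in>P. \<Sum>ij\<in>{0..N} \<times> {0..N}. W \<sigma> p ij) \<le> (\<Prod>p\<in>P. exp (A * real p powr (-\<sigma>)))"
    proof (rule prod_mono)
      fix p assume p: "p \<in> P"
      have "0 \<le> (\<Sum>ij\<in>{0..N} \<times> {0..N}. W \<sigma> p ij)" by (intro sum_nonneg) (auto simp: W_def)
      moreover have "(\<Sum>ij\<in>{0..N} \<times> {0..N}. W \<sigma> p ij) \<le> 1 + A * real p powr (-\<sigma>)"
        using local_bound[OF _ s1, of p N] p Pp unfolding A_def by auto
      moreover have "1 + A * real p powr (-\<sigma>) \<le> exp (A * real p powr (-\<sigma>))" by (rule exp_ge_add_one_self)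
      ultimately show "0 \<le> (\<Sum>ij\<in>{0..N} \<times> {0..N}. W \<sigma> p ij) \<and>
          (\<Sum>ij\<in>{0..N} \<times> {0..N}. W \<sigma> p ij) \<le> exp (A * real p powr (-\<sigma>))" by linarith
    qed
    have c6: "(\<Prod>p\<in>P. exp (A * real p powr (-\<sigma>))) = exp (A * (\<Sum>p\<in>P. real p powr (-\<sigma>)))"
      by (simp only: exp_sum[OF finP] sum_distrib_left)
    have c7: "exp (A * (\<Sum>p\<in>P. real p powr (-\<sigma>))) \<le> exp (A * Z)"
    proof -
      have PS: "P \<subseteq> Suc ` {..<N}"
      proof
        fix p assume "p \<in> P"
        then have "prime p" "p \<le> N" unfolding P_def by auto
        then have "p = Suc (p - 1)" "p - 1 < N" using prime_gt_0_nat[of p] by auto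
        then show "p \<in> Suc ` {..<N}" by blast
      qed
      have "(\<Sum>p\<in>P. real p powr (-\<sigma>)) \<le> (\<Sum>p\<in>Suc ` {..<N}. real p powr (-\<sigma>))"
        by (rule sum_mono2) (use PS in auto)
      also have "\<dots> = (\<Sum>n<N. real (Suc n) powr (-\<sigma>))" by (simp add: sum.reindex)
      also have "\<dots> \<le> Z" unfolding Z_def by (rule sum_le_suminf[OF summ]) auto
      finally have "(\<Sum>p\<in>P. real p powr (-\<sigma>)) \<le> Z" .
      then have "A * (\<Sum>p\<in>P. real p powr (-\<sigma>)) \<le> A * Z" using A0 by (rule mult_left_mono)
      then show ?thesis by simp
    qed
    have c8: "(\<Sum>\<phi>\<in>vec ` T. g \<phi>) \<le> exp (A * Z)" using c3 c4 c5 c6 c7 by linarith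
    have c9: "real N powr \<sigma> * (\<Sum>\<phi>\<in>vec ` T. g \<phi>) \<le> real N powr \<sigma> * exp (A * Z)"
      using c8 by (meson mult_left_mono powr_ge_zero)
    have fin: "(\<Sum>(m, n)\<in>T. real (dvd_part_inf m n) powr (1/2) * real (squarefull_part (m * n)) powr (1/4))
        \<le> exp (A * Z) * real N powr \<sigma>"
      using c1 c2 c2b c9 by (simp only: mult.commute[of "exp (A*Z)"])
    then show "(\<Sum>(m, n)\<in>{(m, n). m \<ge> 1 \<and> n \<ge> 1 \<and> m * n \<le> N}.
        real (dvd_part_inf m n) powr (1/2) * real (squarefull_part (m * n)) powr (1/4))
      \<le> exp (A * Z) * real N powr (1 + \<epsilon>)" unfolding T_def \<sigma>_def .
  qed
qed

end
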